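(* Let $(a_n),(b_n),(c_n),(\delta_n),(\xi_n)$ be sequences of real numbers such that $a_n,b_n,c_n,\xi_n\ge0$ for all $n$; $\lim_{n\to\infty}a_n=0$; $\sum_n b_n<\infty$; $\sum_n c_n=\infty$; the series $\sum_n\delta_n$ converges; and there exists $N_0$ such that for all $n>N_0$, $$\xi_{n+1}\le\max\big(a_n,\,(1+b_n)\xi_n+\delta_n-c_n\big).$$ Then $\lim_{n\to\infty}\xi_n=0$. *)

theory Defs
  imports Complex_Main
begin

end

theory Submission
  imports Defs
begin

lemma tail_tendsto:
  fixes f :: "nat \<Rightarrow> real"
  assumes "summable f"
  shows "(\<lambda>n. \<Sum>i. f (i + n)) \<longlonglongrightarrow> 0"
proof (rule LIMSEQ_I)
  fix r :: real assume "0 < r"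
  from suminf_exist_split[OF this assms] obtain N where "\<forall>n\<ge>N. norm (\<Sum>i. f (i + n)) < r" by blast
  then show "\<exists>no. \<forall>n\<ge>no. norm ((\<Sum>i. f (i + n)) - 0) < r" by auto
qed

lemma tail_step:
  fixes f :: "nat \<Rightarrow> real"
  assumes "summable f"
  shows "(\<Sum>i. f (i + n)) = f n + (\<Sum>i. f (i + Suc n))"
proof -
  have s: "summable (\<lambda>i. f (i + n))" using assms by (rule summable_ignore_initial_segment)
  have "(\<Sum>i. f (Suc i + n)) = (\<Sum>i. f (i + n)) - f (0 + n)"
    using suminf_split_head[OF s] by simp
  moreover have "(\<lambda>i. f (Suc i + n)) = (\<lambda>i. f (i + Suc n))" by simp
  ultimately show ?thesis by simp
qed

lemma bound_lemma:
  fixes u b :: "nat \<Rightarrow> real"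
  assumes u0: "\<And>n. u n \<ge> 0" and b0: "\<And>n. b n \<ge> 0" and sb: "summable b"
    and K0: "K \<ge> 0"
    and rec: "\<And>n. n \<ge> N \<Longrightarrow> u (Suc n) \<le> max K ((1 + b n) * u n)"
  shows "\<exists>C. \<forall>n\<ge>N. u n \<le> C"
proof -
  define C0 where "C0 = max K (u N)"
  define P where "P k = (\<Prod>i<k. 1 + b (N + i))" for k
  have P1: "P k \<ge> 1" for k unfolding P_def using b0 by (intro prod_ge_1) auto
  have main: "u (N + k) \<le> C0 * P k" for k
  proof (induction k)
    case 0 then show ?case by (simp add: C0_def P_def)
  next
    case (Suc k)
    have C00: "C0 \<ge> 0" using K0 by (simp add: C0_def)
    have PS: "P (Suc k) = (1 + b (N + k)) * P k" by (simp add: P_def mult.commute)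
    have "(1 + b (N + k)) * u (N + k) \<le> (1 + b (N + k)) * (C0 * P k)"
      using Suc b0[of "N+k"] by (intro mult_left_mono) auto
    also have "\<dots> = C0 * P (Suc k)" by (simp add: PS)
    finally have h1: "(1 + b (N + k)) * u (N + k) \<le> C0 * P (Suc k)" .
    have h2: "K \<le> C0 * P (Suc k)"
    proof -
      have "K \<le> C0" by (simp add: C0_def)
      also have "C0 \<le> C0 * P (Suc k)" using C00 P1[of "Suc k"]
        by (metis mult_le_cancel_left1 order.strict_iff_not)
      finally show ?thesis .
    qed
    have "u (N + Suc k) \<le> max K ((1 + b (N + k)) * u (N + k))" using rec[of "N+k"] by simp
    then show ?case using h1 h2 by simp
  qed
  define S where "S = (\<Sum>i. b (i + N))"
  have sbN: "summable (\<lambda>i. b (i + N))" using sb by (rule summable_ignore_initial_segment)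
  have Pb: "P k \<le> exp S" for k
  proof -
    have "P k \<le> (\<Prod>i<k. exp (b (N + i)))" unfolding P_def
      using b0 by (intro prod_mono) (auto simp: exp_ge_add_one_self add.commute)
    also have "\<dots> = exp (\<Sum>i<k. b (N + i))" by (simp add: exp_sum)
    also have "(\<Sum>i<k. b (N + i)) \<le> S" unfolding S_def
      using sum_le_suminf[OF sbN, of "{..<k}"] b0 by (simp add: add.commute)
    then have "exp (\<Sum>i<k. b (N + i)) \<le> exp S" by simp
    finally show ?thesis .
  qed
  have C00: "C0 \<ge> 0" using K0 by (simp add: C0_def)
  show ?thesis
  proof (intro exI allI impI)
    fix n assume "N \<le> n"
    then obtain k where k: "n = N + k" using le_Suc_ex by blast
    have "u n \<le> C0 * P k" using main k by simp
    also have "\<dots> \<le> C0 * exp S" using Pb C00 by (intro mult_left_mono) auto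
    finally show "u n \<le> C0 * exp S" .
  qed
qed

lemma conv_lemma:
  fixes u F \<alpha> c :: "nat \<Rightarrow> real"
  assumes c0: "\<And>n. c n \<ge> 0" and nc: "\<not> summable c"
    and F: "F \<longlonglongrightarrow> 0" and al: "\<alpha> \<longlonglongrightarrow> 0"
    and rec: "\<And>n. n \<ge> N \<Longrightarrow> u (Suc n) \<le> max (\<alpha> n) (u n - c n)"
    and uF: "\<And>n. u n \<ge> F n"
  shows "u \<longlonglongrightarrow> 0"
proof (rule LIMSEQ_I)
  fix r :: real assume r: "0 < r"
  define e where "e = r / 2"
  have e: "e > 0" "e < r" using r by (auto simp: e_def)
  obtain N1 where N1: "\<And>n. n \<ge> N1 \<Longrightarrow> norm (F n - 0) < e" using LIMSEQ_D[OF F e(1)] by blast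
  obtain N2 where N2: "\<And>n. n \<ge> N2 \<Longrightarrow> norm (\<alpha> n - 0) < e" using LIMSEQ_D[OF al e(1)] by blast
  define M where "M = max N (max N1 N2)"
  have Fl: "F n > -e" if "n \<ge> M" for n using N1[of n] that by (auto simp: M_def)
  have al': "\<alpha> n < e" if "n \<ge> M" for n using N2[of n] that by (auto simp: M_def)
  have rec': "u (Suc n) \<le> max (\<alpha> n) (u n - c n)" if "n \<ge> M" for n using rec that by (auto simp: M_def)
  have ex: "\<exists>m\<ge>M. u m \<le> e"
  proof (rule ccontr)
    assume "\<not> ?thesis"
    then have big: "\<And>m. m \<ge> M \<Longrightarrow> u m > e" by force
    have step: "u (Suc n) \<le> u n - c n" if "n \<ge> M" for n
      using rec'[OF that] big[of "Suc n"] al'[OF that] that by auto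
    have dec: "u (M + k) \<le> u M - (\<Sum>i<k. c (i + M))" for k
    proof (induction k)
      case 0 then show ?case by simp
    next
      case (Suc k)
      have "u (M + Suc k) \<le> u (M + k) - c (M + k)" using step[of "M+k"] by simp
      then show ?case using Suc by (simp add: add.commute)
    qed
    have "\<not> summable (\<lambda>i. c (i + M))" using nc summable_iff_shift[of c M] by simp
    then have "\<not> (\<forall>k. (\<Sum>i<k. c (i + M)) \<le> u M + e)"
      using summableI_nonneg_bounded[of "\<lambda>i. c (i + M)" "u M + e"] c0 by blast
    then obtain k where k: "(\<Sum>i<k. c (i + M)) > u M + e" using not_le by blast
    have "u (M + k) < - e" using dec[of k] k by simp
    moreover have "u (M + k) \<ge> F (M + k)" by (rule uF)
    ultimately show False using Fl[of "M + k"] by simp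
  qed
  then obtain m where m: "m \<ge> M" "u m \<le> e" by blast
  have stay: "u (m + k) \<le> e" for k
  proof (induction k)
    case 0 then show ?case using m by simp
  next
    case (Suc k)
    have "u (Suc (m + k)) \<le> max (\<alpha> (m + k)) (u (m + k) - c (m + k))"
      using rec'[of "m+k"] m by simp
    then show ?case using Suc al'[of "m+k"] m c0[of "m+k"] by auto
  qed
  show "\<exists>no. \<forall>n\<ge>no. norm (u n - 0) < r"
  proof (intro exI allI impI)
    fix n assume "m \<le> n"
    then obtain k where k: "n = m + k" using le_Suc_ex by blast
    have "u n \<le> e" using stay k by simp
    moreover have "u n > -e" using uF[of n] Fl[of n] k m by force
    ultimately show "norm (u n - 0) < r" using e by auto
  qed
qed

theorem mainTheorem4:
  fixes a b c \<delta> \<xi> :: "nat \<Rightarrow> real"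
  assumes "\<And>n. a n \<ge> 0" and "\<And>n. b n \<ge> 0" and "\<And>n. c n \<ge> 0" and "\<And>n. \<xi> n \<ge> 0"
    and "a \<longlonglongrightarrow> 0"
    and "summable b"
    and "\<not> summable c"
    and "summable \<delta>"
    and "\<exists>N0. \<forall>n>N0. \<xi> (Suc n) \<le> max (a n) ((1 + b n) * \<xi> n + \<delta> n - c n)"
  shows "\<xi> \<longlonglongrightarrow> 0"
proof -
  note a0 = assms(1) and b0 = assms(2) and c0 = assms(3) and x0 = assms(4)
  obtain N0 where N0: "\<And>n. n > N0 \<Longrightarrow> \<xi> (Suc n) \<le> max (a n) ((1 + b n) * \<xi> n + \<delta> n - c n)"
    using assms(9) by blast
  define N where "N = Suc N0"
  have recN: "\<xi> (Suc n) \<le> max (a n) ((1 + b n) * \<xi> n + \<delta> n - c n)" if "n \<ge> N" for n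
    using N0 that by (simp add: N_def)
  define D where "D n = (\<Sum>i. \<delta> (i + n))" for n
  have Dstep: "D n = \<delta> n + D (Suc n)" for n unfolding D_def by (rule tail_step[OF assms(8)])
  have Dlim: "D \<longlonglongrightarrow> 0" unfolding D_def by (rule tail_tendsto[OF assms(8)])
  obtain M where M: "\<And>n. \<bar>D n\<bar> \<le> M" using convergent_imp_Bseq[of D] Dlim
    by (metis Bseq_def convergent_def less_eq_real_def real_norm_def)
  obtain A where A: "\<And>n. a n \<le> A" using convergent_imp_Bseq[of a] assms(5)
    by (metis Bseq_def abs_le_D1 convergent_def real_norm_def)
  define u where "u n = \<xi> n + D n + M" for n
  have M0: "M \<ge> 0" using M[of 0] by simp
  have A0: "A \<ge> 0" using A[of 0] a0[of 0] by simp
  have u0: "u n \<ge> 0" for n using M[of n] x0[of n] by (auto simp: u_def)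
  have urec: "u (Suc n) \<le> max (A + 2 * M) ((1 + b n) * u n)" if "n \<ge> N" for n
  proof -
    have h: "\<xi> (Suc n) \<le> a n \<or> \<xi> (Suc n) \<le> (1 + b n) * \<xi> n + \<delta> n - c n"
      using recN[OF that] by linarith
    show ?thesis
    proof (cases "\<xi> (Suc n) \<le> a n")
      case True
      then show ?thesis using A[of n] M[of "Suc n"] by (auto simp: u_def)
    next
      case False
      then have h2: "\<xi> (Suc n) \<le> (1 + b n) * \<xi> n + \<delta> n - c n" using h by blast
      have "u (Suc n) \<le> (1 + b n) * \<xi> n + \<delta> n + D (Suc n) + M"
        using h2 c0[of n] by (simp add: u_def)
      also have "\<dots> = (1 + b n) * u n - b n * (D n + M)"
        using Dstep[of n] by (simp add: u_def algebra_simps)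
      also have "\<dots> \<le> (1 + b n) * u n"
        using b0[of n] M[of n] by simp
      finally show ?thesis by simp
    qed
  qed
  obtain C where C: "\<And>n. n \<ge> N \<Longrightarrow> u n \<le> C"
    using bound_lemma[OF u0 b0 assms(6), of "A + 2 * M" N, OF _ urec] A0 M0 by auto
  have xC: "\<xi> n \<le> C" if "n \<ge> N" for n using C[OF that] M[of n] by (simp add: u_def)
  define f where "f n = C * b n + \<delta> n" for n
  have sf: "summable f" unfolding f_def using assms(6,8) by (intro summable_add summable_mult)
  define F where "F n = (\<Sum>i. f (i + n))" for n
  have Fstep: "F n = f n + F (Suc n)" for n unfolding F_def by (rule tail_step[OF sf])
  have Flim: "F \<longlonglongrightarrow> 0" unfolding F_def by (rule tail_tendsto[OF sf])
  define v where "v n = \<xi> n + F n" for n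
  define \<alpha> where "\<alpha> n = a n + F (Suc n)" for n
  have al: "\<alpha> \<longlonglongrightarrow> 0" unfolding \<alpha>_def
    using tendsto_add[OF assms(5) LIMSEQ_Suc[OF Flim]] by simp
  have vrec: "v (Suc n) \<le> max (\<alpha> n) (v n - c n)" if "n \<ge> N" for n
  proof (cases "\<xi> (Suc n) \<le> a n")
    case True then show ?thesis by (simp add: v_def \<alpha>_def)
  next
    case False
    then have h2: "\<xi> (Suc n) \<le> (1 + b n) * \<xi> n + \<delta> n - c n" using recN[OF that] by linarith
    have "b n * \<xi> n \<le> b n * C" using xC[OF that] b0[of n] by (intro mult_left_mono)
    then have "\<xi> (Suc n) \<le> \<xi> n + f n - c n" using h2 by (simp add: f_def algebra_simps)
    then show ?thesis using Fstep[of n] by (simp add: v_def)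
  qed
  have vF: "v n \<ge> F n" for n using x0[of n] by (simp add: v_def)
  have "v \<longlonglongrightarrow> 0" by (rule conv_lemma[OF c0 assms(7) Flim al vrec vF])
  then have "(\<lambda>n. v n - F n) \<longlonglongrightarrow> 0 - 0" by (intro tendsto_diff Flim)
  then show ?thesis by (simp add: v_def)
qed

end
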